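(* Let $\varphi:X\to\mathbb R$ be Lipschitz continuous. If $\underline{x}\in\Omega_\varphi$, then the sequence $\left\{\sum_{i=0}^{n-1}\big(\varphi(\sigma^i\underline{x})-\alpha_\varphi\big)\right\}_{n\in\mathbb N_0}$ is bounded.
   Context: $X=[0,1]^{\mathbb N_0}$ with metric $d_X(\underline{x},\underline{y})=\sum_{i\ge0}|x_i-y_i|/2^{i+1}$ and shift $\sigma(\underline{x})_i=x_{i+1}$. $\alpha_\varphi=\inf_\mu\int\varphi\,d\mu$ over $\sigma$-invariant Borel probability measures. $B(\underline{x},\underline{y},n;\varepsilon)=\{\underline{z}: d_X(\underline{x},\underline{z})<\varepsilon,\ d_X(\sigma^n\underline{z},\underline{y})<\varepsilon\}$. Mañé potential $S_\varphi(\underline{x},\underline{y})=\lim_{\varepsilon\to0}\inf\{\sum_{i=0}^{n-1}(\varphi(\sigma^i\underline{z})-\alpha_\varphi): n\in\mathbb N,\ \underline{z}\in B(\underline{x},\underline{y},n;\varepsilon)\}$; Aubry set $\Omega_\varphi=\{\underline{x}: S_\varphi(\underline{x},\underline{x})=0\}$. *)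

theory Defs
  imports "HOL-Probability.Probability"
begin

type_synonym seq = "nat \<Rightarrow> real"

definition XX :: "seq set" where
  "XX = {x. \<forall>i. x i \<in> {0..1}}"

definition dX :: "seq \<Rightarrow> seq \<Rightarrow> real" where
  "dX x y = (\<Sum>i. \<bar>x i - y i\<bar> / 2 ^ (Suc i))"

definition shift :: "seq \<Rightarrow> seq" where
  "shift x = (\<lambda>i. x (Suc i))"

definition dX_open :: "seq set \<Rightarrow> bool" where
  "dX_open U \<longleftrightarrow> U \<subseteq> XX \<and>
     (\<forall>x\<in>U. \<exists>e>0. \<forall>y\<in>XX. dX x y < e \<longrightarrow> y \<in> U)"

definition borel_X :: "seq set set" where
  "borel_X = sigma_sets XX {U. dX_open U}"

definition invariant_prob :: "seq measure \<Rightarrow> bool" where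
  "invariant_prob \<mu> \<longleftrightarrow> prob_space \<mu> \<and> space \<mu> = XX \<and> sets \<mu> = borel_X \<and>
     shift \<in> measurable \<mu> \<mu> \<and> distr \<mu> \<mu> shift = \<mu>"

definition alpha :: "(seq \<Rightarrow> real) \<Rightarrow> real" where
  "alpha \<phi> = Inf {integral\<^sup>L \<mu> \<phi> | \<mu>. invariant_prob \<mu>}"

definition Bset :: "seq \<Rightarrow> seq \<Rightarrow> nat \<Rightarrow> real \<Rightarrow> seq set" where
  "Bset x y n \<epsilon> = {z \<in> XX. dX x z < \<epsilon> \<and> dX ((shift ^^ n) z) y < \<epsilon>}"

definition mane_eps :: "(seq \<Rightarrow> real) \<Rightarrow> seq \<Rightarrow> seq \<Rightarrow> real \<Rightarrow> ereal" where
  "mane_eps \<phi> x y \<epsilon> = Inf {ereal (\<Sum>i<n. \<phi> ((shift ^^ i) z) - alpha \<phi>) | n z.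
      n \<ge> 1 \<and> z \<in> Bset x y n \<epsilon>}"

definition mane :: "(seq \<Rightarrow> real) \<Rightarrow> seq \<Rightarrow> seq \<Rightarrow> ereal" where
  "mane \<phi> x y = Lim (at_right 0) (mane_eps \<phi> x y)"

definition aubry :: "(seq \<Rightarrow> real) \<Rightarrow> seq set" where
  "aubry \<phi> = {x \<in> XX. mane \<phi> x x = 0}"

definition lipschitz_X :: "(seq \<Rightarrow> real) \<Rightarrow> bool" where
  "lipschitz_X \<phi> \<longleftrightarrow> (\<exists>L. \<forall>x\<in>XX. \<forall>y\<in>XX. \<bar>\<phi> x - \<phi> y\<bar> \<le> L * dX x y)"

end

theory Submission
  imports Defs
begin



lemma shift_pow_apply: "(shift ^^ k) x i = x (i + k)"
  by (induction k arbitrary: i) (auto simp: shift_def)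

lemma shift_pow_XX: "x \<in> XX \<Longrightarrow> (shift ^^ k) x \<in> XX"
  by (auto simp: XX_def shift_pow_apply)

lemma dX_term_le: "x \<in> XX \<Longrightarrow> y \<in> XX \<Longrightarrow> \<bar>x i - y i\<bar> / 2 ^ Suc i \<le> (1/2) ^ Suc i"
proof -
  assume "x \<in> XX" "y \<in> XX"
  then have "\<bar>x i - y i\<bar> \<le> 1" by (auto simp: XX_def abs_le_iff) (smt (verit) atLeastAtMost_iff)+
  then show ?thesis by (simp add: divide_right_mono power_one_over)
qed

lemma half_summable: "summable (\<lambda>i. (1/2::real) ^ Suc i)"
proof -
  have "summable (\<lambda>i. (1/2::real) * (1/2)^i)" by (intro summable_mult summable_geometric) simp
  then show ?thesis by simp
qed

lemma half_suminf: "(\<Sum>i. (1/2::real) ^ Suc i) = 1"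
proof -
  have "(\<Sum>i. (1/2::real) * (1/2)^i) = (1/2) * (\<Sum>i. (1/2::real)^i)"
    by (intro suminf_mult summable_geometric) simp
  also have "\<dots> = 1" using suminf_geometric[of "1/2::real"] by simp
  finally show ?thesis by simp
qed

lemma dX_summable: "x \<in> XX \<Longrightarrow> y \<in> XX \<Longrightarrow> summable (\<lambda>i. \<bar>x i - y i\<bar> / 2 ^ Suc i)"
  apply (rule summable_comparison_test[where g="\<lambda>i. (1/2) ^ Suc i"])
  using dX_term_le apply auto[1]
  by (rule half_summable)

lemma dX_nonneg: "x \<in> XX \<Longrightarrow> y \<in> XX \<Longrightarrow> 0 \<le> dX x y"
  unfolding dX_def by (intro suminf_nonneg dX_summable) auto

lemma dX_le1: "x \<in> XX \<Longrightarrow> y \<in> XX \<Longrightarrow> dX x y \<le> 1"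
proof -
  assume a: "x \<in> XX" "y \<in> XX"
  have s: "summable (\<lambda>i. (1/2::real) ^ Suc i)" by (rule half_summable)
  have "dX x y \<le> (\<Sum>i. (1/2::real) ^ Suc i)"
    unfolding dX_def by (rule suminf_le) (use a dX_term_le dX_summable s in auto)
  also have "\<dots> = 1"
    by (rule half_suminf)
  finally show ?thesis .
qed

lemma dX_sym: "dX x y = dX y x"
  unfolding dX_def by (simp add: abs_minus_commute)

lemma dX_triangle: "x \<in> XX \<Longrightarrow> y \<in> XX \<Longrightarrow> z \<in> XX \<Longrightarrow> dX x z \<le> dX x y + dX y z"
proof -
  assume a: "x \<in> XX" "y \<in> XX" "z \<in> XX"
  have "dX x y + dX y z = (\<Sum>i. \<bar>x i - y i\<bar> / 2 ^ Suc i + \<bar>y i - z i\<bar> / 2 ^ Suc i)"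
    unfolding dX_def using a by (intro suminf_add dX_summable) auto
  moreover have "dX x z \<le> (\<Sum>i. \<bar>x i - y i\<bar> / 2 ^ Suc i + \<bar>y i - z i\<bar> / 2 ^ Suc i)"
    unfolding dX_def
  proof (rule suminf_le)
    fix i show "\<bar>x i - z i\<bar> / 2 ^ Suc i \<le> \<bar>x i - y i\<bar> / 2 ^ Suc i + \<bar>y i - z i\<bar> / 2 ^ Suc i"
      by (simp add: add_divide_distrib[symmetric] divide_right_mono)
  next
    show "summable (\<lambda>i. \<bar>x i - z i\<bar> / 2 ^ Suc i)" using a by (rule_tac dX_summable) auto
  next
    show "summable (\<lambda>i. \<bar>x i - y i\<bar> / 2 ^ Suc i + \<bar>y i - z i\<bar> / 2 ^ Suc i)"
      using a by (intro summable_add dX_summable) auto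
  qed
  ultimately show ?thesis by simp
qed

lemma dX_split: assumes "x \<in> XX" "y \<in> XX"
  shows "dX x y = (\<Sum>i<K. \<bar>x i - y i\<bar> / 2 ^ Suc i) + dX ((shift^^K) x) ((shift^^K) y) / 2 ^ K"
proof -
  have "dX x y = (\<Sum>i. \<bar>x (i+K) - y (i+K)\<bar> / 2 ^ Suc (i+K)) + (\<Sum>i<K. \<bar>x i - y i\<bar> / 2 ^ Suc i)"
    unfolding dX_def by (rule suminf_split_initial_segment[OF dX_summable[OF assms]])
  also have "(\<Sum>i. \<bar>x (i+K) - y (i+K)\<bar> / 2 ^ Suc (i+K)) = (\<Sum>i. \<bar>x (i+K) - y (i+K)\<bar> / 2 ^ Suc i) / 2 ^ K"
  proof -
    have "(\<lambda>i. \<bar>x (i+K) - y (i+K)\<bar> / 2 ^ Suc (i+K)) = (\<lambda>i. \<bar>x (i+K) - y (i+K)\<bar> / 2 ^ Suc i / 2 ^ K)"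
      by (simp add: power_add mult.assoc)
    moreover have sK: "summable (\<lambda>i. \<bar>x (i+K) - y (i+K)\<bar> / 2 ^ Suc i)"
      using dX_summable[OF shift_pow_XX[OF assms(1), of K] shift_pow_XX[OF assms(2), of K]]
      by (simp add: shift_pow_apply del: power_Suc)
    ultimately show ?thesis 
      by (simp only: suminf_divide[OF sK])
  qed
  finally show ?thesis by (simp add: dX_def shift_pow_apply)
qed

lemma dX_agree: assumes "x \<in> XX" "y \<in> XX" "\<And>i. i < K \<Longrightarrow> x i = y i"
  shows "dX x y = dX ((shift^^K) x) ((shift^^K) y) / 2 ^ K"
  using dX_split[OF assms(1,2), of K] assms(3) by simp

lemma dX_shift_le: assumes "x \<in> XX" "y \<in> XX"
  shows "dX ((shift^^K) x) ((shift^^K) y) \<le> 2 ^ K * dX x y"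
proof -
  have "0 \<le> (\<Sum>i<K. \<bar>x i - y i\<bar> / 2 ^ Suc i)" by (intro sum_nonneg) auto
  then show ?thesis using dX_split[OF assms, of K] by (simp add: field_simps)
qed

lemma geom_half_sum: "(\<Sum>i<m. (1/2::real) ^ (m - i)) = 1 - (1/2) ^ m"
proof (induction m)
  case (Suc m)
  have "(\<Sum>i<Suc m. (1/2::real) ^ (Suc m - i)) = (\<Sum>i<m. (1/2) * (1/2::real) ^ (m - i)) + 1/2"
    by (simp add: Suc_diff_le)
  also have "\<dots> = (1/2) * (1 - (1/2)^m) + 1/2" by (simp only: sum_distrib_left[symmetric] Suc.IH)
  finally show ?case by simp
qed simp



definition MX :: "seq measure" where "MX = sigma XX {U. dX_open U}"

lemma G_Pow: "{U. dX_open U} \<subseteq> Pow XX" by (auto simp: dX_open_def)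
lemma space_MX[simp]: "space MX = XX" by (simp add: MX_def space_measure_of_conv)
lemma sets_MX: "sets MX = borel_X" unfolding MX_def borel_X_def using G_Pow by (rule sets_measure_of)

lemma open_in_MX: "dX_open U \<Longrightarrow> U \<in> sets MX"
  unfolding sets_MX borel_X_def
  by (rule sigma_sets.Basic) simp

definition lipL :: "(seq \<Rightarrow> real) \<Rightarrow> real \<Rightarrow> bool" where
  "lipL \<phi> L \<longleftrightarrow> 0 \<le> L \<and> (\<forall>x\<in>XX. \<forall>y\<in>XX. \<bar>\<phi> x - \<phi> y\<bar> \<le> L * dX x y)"

lemma lip_obtain: assumes "lipschitz_X \<phi>" obtains L where "lipL \<phi> L"
proof -
  obtain L where L: "\<forall>x\<in>XX. \<forall>y\<in>XX. \<bar>\<phi> x - \<phi> y\<bar> \<le> L * dX x y"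
    using assms unfolding lipschitz_X_def by blast
  have "lipL \<phi> (max L 0)" unfolding lipL_def
  proof (intro conjI ballI)
    fix x y assume "x \<in> XX" "y \<in> XX"
    then have "L * dX x y \<le> max L 0 * dX x y" using dX_nonneg by (intro mult_right_mono) auto
    then show "\<bar>\<phi> x - \<phi> y\<bar> \<le> max L 0 * dX x y" using L \<open>x \<in> XX\<close> \<open>y \<in> XX\<close> by force
  qed simp
  then show ?thesis using that by blast
qed

lemma lipD: "lipL \<phi> L \<Longrightarrow> x \<in> XX \<Longrightarrow> y \<in> XX \<Longrightarrow> \<bar>\<phi> x - \<phi> y\<bar> \<le> L * dX x y"
  unfolding lipL_def by blast

lemma lip_nonneg: "lipL \<phi> L \<Longrightarrow> 0 \<le> L" unfolding lipL_def by blast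

lemma phi_meas: assumes "lipL \<phi> L" shows "\<phi> \<in> borel_measurable MX"
proof (rule borel_measurableI)
  fix S :: "real set" assume "open S"
  have "dX_open (\<phi> -` S \<inter> XX)" unfolding dX_open_def
  proof (intro conjI ballI)
    fix y assume y: "y \<in> \<phi> -` S \<inter> XX"
    then obtain r where r: "r > 0" "ball (\<phi> y) r \<subseteq> S" using \<open>open S\<close> open_contains_ball by blast
    have L0: "0 \<le> L" using assms lip_nonneg by blast
    show "\<exists>e>0. \<forall>y'\<in>XX. dX y y' < e \<longrightarrow> y' \<in> \<phi> -` S \<inter> XX"
    proof (intro exI[of _ "r / (L+1)"] conjI ballI impI)
      show "0 < r / (L+1)" using r L0 by simp
      fix y' assume y': "y' \<in> XX" "dX y y' < r / (L+1)"
      have "\<bar>\<phi> y - \<phi> y'\<bar> \<le> L * dX y y'" using lipD[OF assms] y y' by blast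
      also have "\<dots> \<le> L * (r / (L+1))" using y' L0 by (intro mult_left_mono) auto
      also have "\<dots> < r" using r L0 by (simp add: field_simps)
      finally have "\<phi> y' \<in> ball (\<phi> y) r" by (simp add: dist_real_def)
      then show "y' \<in> \<phi> -` S \<inter> XX" using r y' by blast
    qed
  qed auto
  then show "\<phi> -` S \<inter> space MX \<in> sets MX" using open_in_MX by simp
qed

lemma shift_XX: "x \<in> XX \<Longrightarrow> shift x \<in> XX"
  using shift_pow_XX[of x 1] by simp

lemma shift_meas: "shift \<in> MX \<rightarrow>\<^sub>M MX"
proof -
  have "shift \<in> MX \<rightarrow>\<^sub>M measure_of XX {U. dX_open U} (\<lambda>_. 0)"
  proof (rule measurable_measure_of[OF G_Pow])
    show "shift \<in> space MX \<rightarrow> XX" using shift_XX by auto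
    fix U assume "U \<in> {U. dX_open U}"
    then have U: "dX_open U" by simp
    have "dX_open (shift -` U \<inter> XX)" unfolding dX_open_def
    proof (intro conjI ballI)
      fix y assume y: "y \<in> shift -` U \<inter> XX"
      then obtain e where e: "e > 0" "\<forall>y'\<in>XX. dX (shift y) y' < e \<longrightarrow> y' \<in> U"
        using U unfolding dX_open_def by blast
      show "\<exists>e>0. \<forall>y'\<in>XX. dX y y' < e \<longrightarrow> y' \<in> shift -` U \<inter> XX"
      proof (intro exI[of _ "e/2"] conjI ballI impI)
        show "0 < e/2" using e by simp
        fix y' assume y': "y' \<in> XX" "dX y y' < e/2"
        have "dX (shift y) (shift y') \<le> 2 * dX y y'" using dX_shift_le[of y y' 1] y y' by simp
        then have "dX (shift y) (shift y') < e" using y' by simp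
        then show "y' \<in> shift -` U \<inter> XX" using e y' shift_XX by blast
      qed
    qed auto
    then show "shift -` U \<inter> space MX \<in> sets MX" using open_in_MX by simp
  qed
  then show ?thesis by (simp add: MX_def)
qed

lemma periodic_mod: assumes "(shift ^^ m) q = q" "m > 0"
  shows "(shift ^^ k) q = (shift ^^ (k mod m)) q"
proof (induction k rule: less_induct)
  case (less k)
  show ?case
  proof (cases "k < m")
    case True then show ?thesis by simp
  next
    case False
    then have "k = (k - m) + m" by simp
    then have "(shift ^^ k) q = (shift ^^ (k - m)) ((shift ^^ m) q)" by (metis funpow_add o_apply)
    also have "\<dots> = (shift ^^ (k - m)) q" using assms by simp
    also have "\<dots> = (shift ^^ ((k - m) mod m)) q" using less False assms by simp
    also have "(k - m) mod m = k mod m" using False by (simp add: mod_if)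
    finally show ?thesis .
  qed
qed



lemma phi_bounded: assumes "lipL \<phi> L" "q \<in> XX" "y \<in> XX" shows "\<bar>\<phi> y\<bar> \<le> \<bar>\<phi> q\<bar> + L"
proof -
  have "\<bar>\<phi> y - \<phi> q\<bar> \<le> L * dX y q" using lipD[OF assms(1) assms(3,2)] .
  also have "\<dots> \<le> L * 1" using dX_le1[OF assms(3,2)] lip_nonneg[OF assms(1)] by (intro mult_left_mono) auto
  finally show ?thesis by simp
qed

lemma alpha_bdd: assumes "lipL \<phi> L" "q \<in> XX"
  shows "bdd_below {integral\<^sup>L \<mu> \<phi> | \<mu>. invariant_prob \<mu>}"
proof (rule bdd_belowI)
  fix v assume "v \<in> {integral\<^sup>L \<mu> \<phi> | \<mu>. invariant_prob \<mu>}"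
  then obtain \<mu> where v: "v = integral\<^sup>L \<mu> \<phi>" and inv: "invariant_prob \<mu>" by blast
  have ps: "prob_space \<mu>" and sp: "space \<mu> = XX" using inv unfolding invariant_prob_def by auto
  let ?B = "\<bar>\<phi> q\<bar> + L"
  have B0: "0 \<le> ?B" using lip_nonneg[OF assms(1)] by simp
  show "- ?B \<le> v"
  proof (cases "integrable \<mu> \<phi>")
    case True
    have "integral\<^sup>L \<mu> (\<lambda>_. - ?B) \<le> integral\<^sup>L \<mu> \<phi>"
    proof (rule integral_mono)
      show "integrable \<mu> (\<lambda>_. - ?B)" using ps by (simp add: prob_space.finite_measure finite_measure.integrable_const)
      show "integrable \<mu> \<phi>" by fact
      fix x assume "x \<in> space \<mu>"
      then show "- ?B \<le> \<phi> x" using phi_bounded[OF assms, of x] sp by auto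
    qed
    then show ?thesis using v ps by (simp add: prob_space.prob_space)
  next
    case False
    then show ?thesis using v B0 by (simp add: not_integrable_integral_eq)
  qed
qed

lemma alpha_le_periodic:
  assumes lip: "lipL \<phi> L" and q: "q \<in> XX" and m: "m > 0" and per: "(shift ^^ m) q = q"
  shows "alpha \<phi> \<le> (\<Sum>i<m. \<phi> ((shift ^^ i) q)) / m"
proof -
  define P where "P = measure_pmf (pmf_of_set {..<m})"
  define f where "f = (\<lambda>i. (shift ^^ i) q)"
  define g where "g = (\<lambda>i. Suc i mod m)"
  define \<mu> where "\<mu> = distr P MX f"
  have fM: "f \<in> P \<rightarrow>\<^sub>M MX" unfolding P_def measurable_pmf_measure1 f_def using shift_pow_XX[OF q] by auto
  have fM': "f \<in> count_space UNIV \<rightarrow>\<^sub>M MX" unfolding measurable_count_space_eq1 f_def using shift_pow_XX[OF q] by auto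
  have gM: "g \<in> P \<rightarrow>\<^sub>M count_space UNIV" unfolding P_def measurable_pmf_measure1 by simp
  have ps: "prob_space \<mu>" unfolding \<mu>_def P_def
    by (rule prob_space.prob_space_distr) (use fM P_def prob_space_measure_pmf in auto)
  have sp: "space \<mu> = XX" unfolding \<mu>_def by simp
  have st: "sets \<mu> = borel_X" unfolding \<mu>_def by (simp add: sets_MX)
  have stM: "sets \<mu> = sets MX" unfolding \<mu>_def by simp
  have shM: "shift \<in> \<mu> \<rightarrow>\<^sub>M \<mu>" using shift_meas measurable_cong_sets[OF stM stM] by simp
  have inj: "inj_on g {..<m}" unfolding g_def inj_on_def
  proof (intro ballI impI)
    fix i j assume ij: "i \<in> {..<m}" "j \<in> {..<m}" "Suc i mod m = Suc j mod m"
    show "i = j"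
    proof (cases "Suc i = m")
      case True
      then show ?thesis using ij by (cases "Suc j = m") auto
    next
      case False
      then show ?thesis using ij by (cases "Suc j = m") auto
    qed
  qed
  have gimg: "g ` {..<m} = {..<m}"
    by (rule endo_inj_surj) (use inj m in \<open>auto simp: g_def\<close>)
  have mp: "map_pmf g (pmf_of_set {..<m}) = pmf_of_set {..<m}"
    using map_pmf_of_set_inj[OF inj] m gimg by auto
  have comm: "shift \<circ> f = f \<circ> g"
  proof
    fix i
    have "(shift \<circ> f) i = (shift ^^ Suc i) q" by (simp add: f_def)
    also have "\<dots> = (shift ^^ (Suc i mod m)) q" using periodic_mod[OF per m] by blast
    finally show "(shift \<circ> f) i = (f \<circ> g) i" by (simp add: f_def g_def)
  qed
  have "distr \<mu> \<mu> shift = distr \<mu> MX shift" by (rule distr_cong) (use stM in auto)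
  also have "\<dots> = distr P MX (shift \<circ> f)" unfolding \<mu>_def by (rule distr_distr[OF shift_meas fM])
  also have "\<dots> = distr P MX (f \<circ> g)" by (simp add: comm)
  also have "\<dots> = distr (distr P (count_space UNIV) g) MX f" by (rule distr_distr[OF fM' gM, symmetric])
  also have "distr P (count_space UNIV) g = P" unfolding P_def using map_pmf_rep_eq[of g] mp by metis
  finally have dist: "distr \<mu> \<mu> shift = \<mu>" unfolding \<mu>_def .
  have inv: "invariant_prob \<mu>" unfolding invariant_prob_def using ps sp st shM dist by blast
  have "integral\<^sup>L \<mu> \<phi> = integral\<^sup>L P (\<lambda>i. \<phi> (f i))" unfolding \<mu>_def
    by (rule integral_distr[OF fM phi_meas[OF lip]])
  also have "\<dots> = (\<Sum>i<m. \<phi> ((shift ^^ i) q)) / m" unfolding P_def f_def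
    using m by (subst integral_pmf_of_set) auto
  finally have I: "integral\<^sup>L \<mu> \<phi> = (\<Sum>i<m. \<phi> ((shift ^^ i) q)) / m" .
  show ?thesis unfolding alpha_def
    by (rule cInf_lower[OF _ alpha_bdd[OF lip q]]) (unfold mem_Collect_eq, intro exI[of _ \<mu>], simp add: inv I)
qed



lemma mane_eps_anti: "e1 \<le> e2 \<Longrightarrow> mane_eps \<phi> x y e2 \<le> mane_eps \<phi> x y e1"
  unfolding mane_eps_def
proof (rule Inf_superset_mono, rule subsetI)
  fix v assume e: "e1 \<le> e2" and "v \<in> {ereal (\<Sum>i<n. \<phi> ((shift ^^ i) z) - alpha \<phi>) |n z. 1 \<le> n \<and> z \<in> Bset x y n e1}"
  then obtain n z where v: "v = ereal (\<Sum>i<n. \<phi> ((shift ^^ i) z) - alpha \<phi>)" "1 \<le> n" "z \<in> Bset x y n e1" by blast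
  then have "z \<in> Bset x y n e2" using e unfolding Bset_def by auto
  then show "v \<in> {ereal (\<Sum>i<n. \<phi> ((shift ^^ i) z) - alpha \<phi>) |n z. 1 \<le> n \<and> z \<in> Bset x y n e2}"
    using v by blast
qed

lemma aubry_extract:
  assumes "x \<in> aubry \<phi>" "\<epsilon> > 0"
  shows "\<exists>m z. m \<ge> 1 \<and> z \<in> Bset x x m \<epsilon> \<and> (\<Sum>i<m. \<phi> ((shift ^^ i) z) - alpha \<phi>) < \<epsilon>"
proof -
  define f where "f = mane_eps \<phi> x x"
  define S where "S = (SUP e\<in>{0<..}. f e)"
  have lim: "(f \<longlongrightarrow> S) (at_right 0)"
  proof (rule order_tendstoI)
    fix a assume "a < S"
    then obtain e1 where e1: "e1 > 0" "a < f e1" unfolding S_def less_SUP_iff by auto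
    show "eventually (\<lambda>y. a < f y) (at_right 0)"
      unfolding eventually_at_right_field
    proof (intro exI[of _ e1] conjI allI impI)
      fix y :: real assume "0 < y" "y < e1"
      then have "f e1 \<le> f y" unfolding f_def by (intro mane_eps_anti) simp
      then show "a < f y" using e1 by simp
    qed (use e1 in simp)
  next
    fix a assume "S < a"
    show "eventually (\<lambda>y. f y < a) (at_right 0)"
      unfolding eventually_at_right_field
    proof (intro exI[of _ 1] conjI allI impI)
      fix y :: real assume "0 < y" "y < 1"
      then have "f y \<le> S" unfolding S_def by (intro SUP_upper) simp
      then show "f y < a" using \<open>S < a\<close> by simp
    qed simp
  qed
  have "mane \<phi> x x = S" unfolding mane_def f_def[symmetric]
    by (rule tendsto_Lim[OF _ lim]) simp
  then have S0: "S = 0" using assms(1) unfolding aubry_def by simp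
  have "f \<epsilon> \<le> S" unfolding S_def using assms(2) by (intro SUP_upper) simp
  moreover have "ereal 0 < ereal \<epsilon>" using assms(2) by simp
  ultimately have "f \<epsilon> < ereal \<epsilon>" using S0 zero_ereal_def by (metis order_le_less_trans)
  then obtain v where "v \<in> {ereal (\<Sum>i<n. \<phi> ((shift ^^ i) z) - alpha \<phi>) | n z.
      n \<ge> 1 \<and> z \<in> Bset x x n \<epsilon>}" "v < ereal \<epsilon>"
    unfolding f_def mane_eps_def Inf_less_iff by blast
  then show ?thesis by auto blast
qed



definition Ssum :: "(seq \<Rightarrow> real) \<Rightarrow> seq \<Rightarrow> nat \<Rightarrow> real" where
  "Ssum \<phi> w n = (\<Sum>i<n. \<phi> ((shift ^^ i) w) - alpha \<phi>)"

lemma Ssum_add: "Ssum \<phi> w (a + b) = Ssum \<phi> w a + Ssum \<phi> ((shift ^^ a) w) b"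
proof (induction b)
  case (Suc b)
  have "(shift ^^ (a + b)) w = (shift ^^ b) ((shift ^^ a) w)" by (metis add.commute funpow_add o_apply)
  then show ?case using Suc by (simp add: Ssum_def)
qed (simp add: Ssum_def)

lemma Ssum_diff: assumes "lipL \<phi> L" "w \<in> XX" "w' \<in> XX"
  shows "Ssum \<phi> w n \<le> Ssum \<phi> w' n + L * (\<Sum>i<n. dX ((shift ^^ i) w) ((shift ^^ i) w'))"
proof -
  have "Ssum \<phi> w n - Ssum \<phi> w' n = (\<Sum>i<n. \<phi> ((shift ^^ i) w) - \<phi> ((shift ^^ i) w'))"
    unfolding Ssum_def by (simp add: sum_subtractf[symmetric])
  also have "\<dots> \<le> (\<Sum>i<n. L * dX ((shift ^^ i) w) ((shift ^^ i) w'))"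
  proof (rule sum_mono)
    fix i show "\<phi> ((shift ^^ i) w) - \<phi> ((shift ^^ i) w') \<le> L * dX ((shift ^^ i) w) ((shift ^^ i) w')"
      using lipD[OF assms(1) shift_pow_XX[OF assms(2)] shift_pow_XX[OF assms(3)], of i i] by simp
  qed
  finally show ?thesis by (simp add: sum_distrib_left)
qed

definition per :: "seq \<Rightarrow> nat \<Rightarrow> seq" where "per w n = (\<lambda>j. w (j mod n))"

lemma per_XX: "w \<in> XX \<Longrightarrow> per w n \<in> XX" by (auto simp: XX_def per_def)
lemma per_per: "(shift ^^ n) (per w n) = per w n"
  by (rule ext) (simp add: shift_pow_apply per_def)
lemma per_agree: "i < n \<Longrightarrow> per w n i = w i" by (simp add: per_def)

lemma agree_sum: assumes "x \<in> XX" "y \<in> XX" "\<And>j. j < n \<Longrightarrow> x j = y j"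
  shows "(\<Sum>i<n. dX ((shift ^^ i) x) ((shift ^^ i) y)) \<le> dX ((shift ^^ n) x) ((shift ^^ n) y)"
proof -
  let ?D = "dX ((shift ^^ n) x) ((shift ^^ n) y)"
  have D0: "0 \<le> ?D" using dX_nonneg shift_pow_XX assms by blast
  have "(\<Sum>i<n. dX ((shift ^^ i) x) ((shift ^^ i) y)) = (\<Sum>i<n. (1/2) ^ (n - i) * ?D)"
  proof (rule sum.cong)
    fix i assume i: "i \<in> {..<n}"
    have "dX ((shift ^^ i) x) ((shift ^^ i) y) =
        dX ((shift ^^ (n-i)) ((shift ^^ i) x)) ((shift ^^ (n-i)) ((shift ^^ i) y)) / 2 ^ (n - i)"
      by (rule dX_agree) (use assms i in \<open>auto simp: shift_pow_XX shift_pow_apply\<close>)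
    also have "(shift ^^ (n-i)) ((shift ^^ i) x) = (shift ^^ n) x" using i
      by (metis funpow_add le_add_diff_inverse2 lessThan_iff less_or_eq_imp_le o_apply)
    also have "(shift ^^ (n-i)) ((shift ^^ i) y) = (shift ^^ n) y" using i
      by (metis funpow_add le_add_diff_inverse2 lessThan_iff less_or_eq_imp_le o_apply)
    finally show "dX ((shift ^^ i) x) ((shift ^^ i) y) = (1/2) ^ (n - i) * ?D"
      by (simp add: power_one_over)
  qed simp
  also have "\<dots> = (1 - (1/2)^n) * ?D" by (simp add: sum_distrib_right[symmetric] geom_half_sum)
  also have "\<dots> \<le> ?D" 
  proof -
    have "0 \<le> (1/2::real)^n * ?D" using D0 by simp
    then show ?thesis by (simp add: algebra_simps)
  qed
  finally show ?thesis .
qed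

lemma lower_bound: assumes lip: "lipL \<phi> L" and w: "w \<in> XX" shows "- L \<le> Ssum \<phi> w n"
proof (cases "n = 0")
  case True then show ?thesis using lip_nonneg[OF lip] by (simp add: Ssum_def)
next
  case False
  define q where "q = per w n"
  have q: "q \<in> XX" using per_XX[OF w] q_def by simp
  have "alpha \<phi> \<le> (\<Sum>i<n. \<phi> ((shift ^^ i) q)) / n"
    using alpha_le_periodic[OF lip q, of n] False per_per q_def by simp
  then have "0 \<le> Ssum \<phi> q n" using False by (simp add: Ssum_def sum_subtractf field_simps)
  moreover have "Ssum \<phi> q n \<le> Ssum \<phi> w n + L * (\<Sum>i<n. dX ((shift ^^ i) q) ((shift ^^ i) w))"
    by (rule Ssum_diff[OF lip q w])
  moreover have "(\<Sum>i<n. dX ((shift ^^ i) q) ((shift ^^ i) w)) \<le> 1"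
    using agree_sum[OF q w, of n] dX_le1[OF shift_pow_XX[OF q, of n] shift_pow_XX[OF w, of n]]
      per_agree q_def by fastforce
  ultimately show ?thesis using lip_nonneg[OF lip]
    by (smt (verit) mult_left_le)
qed

lemma Ssum_periodic: assumes "(shift ^^ m) q = q"
  shows "Ssum \<phi> q (k * m + r) = k * Ssum \<phi> q m + Ssum \<phi> q r"
proof (induction k)
  case (Suc k)
  have "Ssum \<phi> q (Suc k * m + r) = Ssum \<phi> q (m + (k * m + r))" by (simp add: add.assoc)
  also have "\<dots> = Ssum \<phi> q m + Ssum \<phi> q (k * m + r)" using Ssum_add[of \<phi> q m] assms by simp
  finally show ?case using Suc by (simp add: algebra_simps)
qed simp



lemma upper_bound: assumes lip: "lipL \<phi> L" and xa: "x \<in> aubry \<phi>" shows "Ssum \<phi> x n \<le> L + 1"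
proof -
  have x: "x \<in> XX" using xa unfolding aubry_def by simp
  have L0: "0 \<le> L" using lip_nonneg[OF lip] .
  define E where "E = (real n + 1) * (1 + 4 * L) + 3 * L * real n * 2 ^ n"
  have E0: "0 \<le> E" unfolding E_def using L0 by simp
  define \<epsilon> where "\<epsilon> = 1 / (2 * E + 2)"
  have ep: "\<epsilon> > 0" unfolding \<epsilon>_def using E0 by simp
  have Eep: "E * \<epsilon> \<le> 1" unfolding \<epsilon>_def using E0 by (simp add: field_simps)
  obtain m z where m: "m \<ge> 1" and zB: "z \<in> Bset x x m \<epsilon>" and Sz: "Ssum \<phi> z m < \<epsilon>"
    using aubry_extract[OF xa ep] unfolding Ssum_def by blast
  have z: "z \<in> XX" and dxz: "dX x z < \<epsilon>" and dmz: "dX ((shift ^^ m) z) x < \<epsilon>"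
    using zB unfolding Bset_def by auto
  define q where "q = per z m"
  have q: "q \<in> XX" unfolding q_def using per_XX[OF z] .
  have qper: "(shift ^^ m) q = q" unfolding q_def by (rule per_per)
  have agr: "\<And>j. j < m \<Longrightarrow> z j = q j" unfolding q_def using per_agree by metis
  define D where "D = dX ((shift ^^ m) z) q"
  have D0: "0 \<le> D" unfolding D_def using dX_nonneg shift_pow_XX z q by blast
  have "dX z q = D / 2 ^ m" unfolding D_def using dX_agree[OF z q agr, of m] qper by simp
  moreover have p2: "(2::real) ^ 1 \<le> 2 ^ m" using m by (intro power_increasing) auto
  have "D / 2 ^ m \<le> D / 2" by (rule divide_left_mono) (use p2 D0 in auto)
  ultimately have dzq: "dX z q \<le> D / 2" by simp
  have "D \<le> dX ((shift ^^ m) z) x + dX x q" unfolding D_def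
    using dX_triangle shift_pow_XX z x q by blast
  moreover have dxq0: "dX x q \<le> dX x z + dX z q" using dX_triangle x z q by blast
  ultimately have D4: "D \<le> 4 * \<epsilon>" using dxz dmz dzq by linarith
  have dxq: "dX x q \<le> 3 * \<epsilon>" using dxq0 dxz dzq D4 by linarith
  have "Ssum \<phi> q m \<le> Ssum \<phi> z m + L * (\<Sum>i<m. dX ((shift ^^ i) q) ((shift ^^ i) z))"
    by (rule Ssum_diff[OF lip q z])
  moreover have "(\<Sum>i<m. dX ((shift ^^ i) q) ((shift ^^ i) z)) \<le> D"
    using agree_sum[OF q z, of m] agr qper dX_sym unfolding D_def by metis
  ultimately have "Ssum \<phi> q m \<le> Ssum \<phi> z m + L * D"
    using L0 by (smt (verit) mult_left_mono)
  moreover have "L * D \<le> L * (4 * \<epsilon>)" using D4 L0 by (intro mult_left_mono)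
  ultimately have Sqm: "Ssum \<phi> q m \<le> \<epsilon> + 4 * L * \<epsilon>" using Sz by linarith
  define k where "k = n div m"
  define r where "r = n mod m"
  have nkr: "n = k * m + r" unfolding k_def r_def by simp
  have rm: "r < m" unfolding r_def using m by simp
  have "Ssum \<phi> q m = Ssum \<phi> q r + Ssum \<phi> ((shift ^^ r) q) (m - r)"
    using Ssum_add[of \<phi> q r "m - r"] rm by simp
  moreover have "- L \<le> Ssum \<phi> ((shift ^^ r) q) (m - r)" by (rule lower_bound[OF lip shift_pow_XX[OF q]])
  ultimately have Sqr: "Ssum \<phi> q r \<le> Ssum \<phi> q m + L" by linarith
  have Sqn: "Ssum \<phi> q n = k * Ssum \<phi> q m + Ssum \<phi> q r" using nkr Ssum_periodic[OF qper] by simp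
  have kn: "real k \<le> real n" unfolding k_def by simp
  have "(real k + 1) * Ssum \<phi> q m \<le> (real n + 1) * (\<epsilon> + 4 * L * \<epsilon>)"
  proof (cases "Ssum \<phi> q m \<le> 0")
    case True
    then have "(real k + 1) * Ssum \<phi> q m \<le> 0" by (simp add: mult_nonneg_nonpos)
    moreover have "0 \<le> (real n + 1) * (\<epsilon> + 4 * L * \<epsilon>)" using ep L0 by simp
    ultimately show ?thesis by linarith
  next
    case False
    have "(real k + 1) * Ssum \<phi> q m \<le> (real n + 1) * Ssum \<phi> q m" using False kn by (intro mult_right_mono) auto
    also have "\<dots> \<le> (real n + 1) * (\<epsilon> + 4 * L * \<epsilon>)" using Sqm by (intro mult_left_mono) auto
    finally show ?thesis .
  qed
  then have Sqn2: "Ssum \<phi> q n \<le> (real n + 1) * (\<epsilon> + 4 * L * \<epsilon>) + L"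
    using Sqn Sqr by (simp add: algebra_simps)
  have "Ssum \<phi> x n \<le> Ssum \<phi> q n + L * (\<Sum>i<n. dX ((shift ^^ i) x) ((shift ^^ i) q))"
    by (rule Ssum_diff[OF lip x q])
  moreover have "(\<Sum>i<n. dX ((shift ^^ i) x) ((shift ^^ i) q)) \<le> real n * (2 ^ n * (3 * \<epsilon>))"
  proof -
    have "(\<Sum>i<n. dX ((shift ^^ i) x) ((shift ^^ i) q)) \<le> real (card {..<n}) * (2 ^ n * (3 * \<epsilon>))"
    proof (rule sum_bounded_above)
      fix i assume i: "i \<in> {..<n}"
      have "dX ((shift ^^ i) x) ((shift ^^ i) q) \<le> 2 ^ i * dX x q" by (rule dX_shift_le[OF x q])
      also have "\<dots> \<le> 2 ^ n * (3 * \<epsilon>)"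
        using i dxq dX_nonneg[OF x q] by (intro mult_mono power_increasing) auto
      finally show "dX ((shift ^^ i) x) ((shift ^^ i) q) \<le> 2 ^ n * (3 * \<epsilon>)" .
    qed
    then show ?thesis by simp
  qed
  then have "L * (\<Sum>i<n. dX ((shift ^^ i) x) ((shift ^^ i) q)) \<le> L * (real n * (2 ^ n * (3 * \<epsilon>)))"
    using L0 by (intro mult_left_mono)
  ultimately have "Ssum \<phi> x n \<le> (real n + 1) * (\<epsilon> + 4 * L * \<epsilon>) + L + L * (real n * (2 ^ n * (3 * \<epsilon>)))"
    using Sqn2 by linarith
  also have "\<dots> = L + E * \<epsilon>" unfolding E_def by (simp add: algebra_simps)
  finally show ?thesis using Eep by linarith
qed

theorem proposition2p9:
  fixes \<phi> :: "seq \<Rightarrow> real" and x :: seq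
  assumes "lipschitz_X \<phi>"
    and "x \<in> aubry \<phi>"
  shows "\<exists>C. \<forall>n::nat. \<bar>\<Sum>i<n. \<phi> ((shift ^^ i) x) - alpha \<phi>\<bar> \<le> C"
proof -
  obtain L where lip: "lipL \<phi> L" using lip_obtain[OF assms(1)] by blast
  have x: "x \<in> XX" using assms(2) unfolding aubry_def by simp
  have "\<forall>n::nat. \<bar>Ssum \<phi> x n\<bar> \<le> L + 1"
  proof
    fix n
    have "- L \<le> Ssum \<phi> x n" by (rule lower_bound[OF lip x])
    moreover have "Ssum \<phi> x n \<le> L + 1" by (rule upper_bound[OF lip assms(2)])
    ultimately show "\<bar>Ssum \<phi> x n\<bar> \<le> L + 1" by linarith
  qed
  then show ?thesis unfolding Ssum_def by blast
qed

end
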